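(* Let $\Theta$ be a typed signature. For every $\varphi\in\mathcal L_{\mathrm{VCL}}(\Theta)$, if $\varphi$ is true at every state of every VCL model over $\Theta$, then $\vdash_{\mathrm{VCL}_\Theta}\varphi$.
   Context: A typed signature is $\Theta=(\mathrm{Ag},X,\{D_x\}_{x\in X})$ with $\mathrm{Ag}$ a finite non-empty set of agents, $X$ a finite set of variables, each $D_x$ finite non-empty. $\overline C=\mathrm{Ag}\setminus C$, $\Sigma_C=\prod_{i\in C}\Sigma_i$ ($\Sigma_\varnothing$ a singleton). $\mathcal L_{\mathrm{VCL}}(\Theta)$: $\varphi::=\top\mid(x{=}c)\mid\neg\varphi\mid\varphi\wedge\psi\mid[C]\varphi$ ($x\in X,c\in D_x,C\subseteq\mathrm{Ag}$). A VCL model is $\mathcal M=(S,\{\Sigma_i\},o,\pi)$ with $S,\Sigma_i\neq\varnothing$, $o:S\times\Sigma_{\mathrm{Ag}}\to S$, $\pi:S\to\prod_x D_x$; $(x{=}c)$ true at $s$ iff $\pi(s)(x)=c$; Boolean clauses usual; $[C]\varphi$ true at $s$ iff $\exists\alpha_C\in\Sigma_C\,\forall\beta_{\overline C}\in\Sigma_{\overline C}$: $\varphi$ true at $o(s,\alpha_C\sqcup\beta_{\overline C})$. The Hilbert system $\mathrm{VCL}_\Theta$ has: all instances of classical propositional tautologies; for $C,D\subseteq\mathrm{Ag}$: (C1) $[C](\varphi\wedge\psi)\to[C]\varphi$; (C2) $\neg[C]\bot$; (C3) $[C]\top$; (C4) $[C]\varphi\wedge[D]\psi\to[C\cup D](\varphi\wedge\psi)$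 when $C\cap D=\varnothing$; (C5) $\neg[\varnothing]\neg\varphi\to[\mathrm{Ag}]\varphi$; (V1) $\bigvee_{c\in D_x}(x{=}c)$; (V2) $(x{=}c)\to\neg(x{=}d)$ for distinct $c,d\in D_x$; rules MP and RE (from $\vdash\varphi\leftrightarrow\psi$ infer $\vdash[C]\varphi\leftrightarrow[C]\psi$). *)

theory Defs
  imports "HOL-Library.FuncSet"
begin

datatype ('a, 'x, 'v) fm =
    Top
  | Eq 'x 'v
  | Neg "('a, 'x, 'v) fm"
  | And "('a, 'x, 'v) fm" "('a, 'x, 'v) fm"
  | Box "'a set" "('a, 'x, 'v) fm"

definition Bot :: "('a, 'x, 'v) fm" where "Bot = Neg Top"
definition Or :: "('a, 'x, 'v) fm \<Rightarrow> ('a, 'x, 'v) fm \<Rightarrow> ('a, 'x, 'v) fm"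
  where "Or p q = Neg (And (Neg p) (Neg q))"
definition Imp :: "('a, 'x, 'v) fm \<Rightarrow> ('a, 'x, 'v) fm \<Rightarrow> ('a, 'x, 'v) fm"
  where "Imp p q = Neg (And p (Neg q))"
definition Iff :: "('a, 'x, 'v) fm \<Rightarrow> ('a, 'x, 'v) fm \<Rightarrow> ('a, 'x, 'v) fm"
  where "Iff p q = And (Imp p q) (Imp q p)"

primrec disj_eq :: "'x \<Rightarrow> 'v list \<Rightarrow> ('a, 'x, 'v) fm" where
  "disj_eq x [] = Bot"
| "disj_eq x (c # cs) = Or (Eq x c) (disj_eq x cs)"

definition signature :: "'a set \<Rightarrow> 'x set \<Rightarrow> ('x \<Rightarrow> 'v set) \<Rightarrow> bool" where
  "signature Ag X D \<longleftrightarrow> finite Ag \<and> Ag \<noteq> {} \<and> finite X \<and>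
     (\<forall>x\<in>X. finite (D x) \<and> D x \<noteq> {})"

primrec wf :: "'a set \<Rightarrow> 'x set \<Rightarrow> ('x \<Rightarrow> 'v set) \<Rightarrow> ('a, 'x, 'v) fm \<Rightarrow> bool" where
  "wf Ag X D Top = True"
| "wf Ag X D (Eq x c) = (x \<in> X \<and> c \<in> D x)"
| "wf Ag X D (Neg p) = wf Ag X D p"
| "wf Ag X D (And p q) = (wf Ag X D p \<and> wf Ag X D q)"
| "wf Ag X D (Box C p) = (C \<subseteq> Ag \<and> wf Ag X D p)"

definition merge :: "'a set \<Rightarrow> ('a \<Rightarrow> 'act) \<Rightarrow> ('a \<Rightarrow> 'act) \<Rightarrow> ('a \<Rightarrow> 'act)" where
  "merge C \<alpha> \<beta> = (\<lambda>i. if i \<in> C then \<alpha> i else \<beta> i)"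

text \<open>A VCL model (S, Sigma_i, o, pi) over Theta. Joint actions Sigma_C are the
  extensional functions in PiE C Sig (so Sigma_{} is a singleton).\<close>
definition is_model ::
  "'a set \<Rightarrow> 'x set \<Rightarrow> ('x \<Rightarrow> 'v set) \<Rightarrow> 's set \<Rightarrow> ('a \<Rightarrow> 'act set)
   \<Rightarrow> ('s \<Rightarrow> ('a \<Rightarrow> 'act) \<Rightarrow> 's) \<Rightarrow> ('s \<Rightarrow> 'x \<Rightarrow> 'v) \<Rightarrow> bool" where
  "is_model Ag X D S Sig out val \<longleftrightarrow>
     S \<noteq> {} \<and> (\<forall>i\<in>Ag. Sig i \<noteq> {}) \<and>
     (\<forall>s\<in>S. \<forall>\<sigma>\<in>PiE Ag Sig. out s \<sigma> \<in> S) \<and>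
     (\<forall>s\<in>S. \<forall>x\<in>X. val s x \<in> D x)"

primrec sat :: "'a set \<Rightarrow> ('a \<Rightarrow> 'act set) \<Rightarrow> ('s \<Rightarrow> ('a \<Rightarrow> 'act) \<Rightarrow> 's)
    \<Rightarrow> ('s \<Rightarrow> 'x \<Rightarrow> 'v) \<Rightarrow> 's \<Rightarrow> ('a, 'x, 'v) fm \<Rightarrow> bool" where
  "sat Ag Sig out val s Top = True"
| "sat Ag Sig out val s (Eq x c) = (val s x = c)"
| "sat Ag Sig out val s (Neg p) = (\<not> sat Ag Sig out val s p)"
| "sat Ag Sig out val s (And p q) = (sat Ag Sig out val s p \<and> sat Ag Sig out val s q)"
| "sat Ag Sig out val s (Box C p) =
     (\<exists>\<alpha>\<in>PiE C Sig. \<forall>\<beta>\<in>PiE (Ag - C) Sig. sat Ag Sig out val (out s (merge C \<alpha> \<beta>)) p)"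

primrec peval :: "(('a, 'x, 'v) fm \<Rightarrow> bool) \<Rightarrow> ('a, 'x, 'v) fm \<Rightarrow> bool" where
  "peval V Top = True"
| "peval V (Eq x c) = V (Eq x c)"
| "peval V (Neg p) = (\<not> peval V p)"
| "peval V (And p q) = (peval V p \<and> peval V q)"
| "peval V (Box C p) = V (Box C p)"

definition taut :: "('a, 'x, 'v) fm \<Rightarrow> bool" where
  "taut p \<longleftrightarrow> (\<forall>V. peval V p)"

inductive derivable :: "'a set \<Rightarrow> 'x set \<Rightarrow> ('x \<Rightarrow> 'v set) \<Rightarrow> ('a, 'x, 'v) fm \<Rightarrow> bool"
  for Ag X D where
  Taut: "wf Ag X D p \<Longrightarrow> taut p \<Longrightarrow> derivable Ag X D p"
| C1: "wf Ag X D p \<Longrightarrow> wf Ag X D q \<Longrightarrow> C \<subseteq> Ag \<Longrightarrow>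
       derivable Ag X D (Imp (Box C (And p q)) (Box C p))"
| C2: "C \<subseteq> Ag \<Longrightarrow> derivable Ag X D (Neg (Box C Bot))"
| C3: "C \<subseteq> Ag \<Longrightarrow> derivable Ag X D (Box C Top)"
| C4: "wf Ag X D p \<Longrightarrow> wf Ag X D q \<Longrightarrow> C \<subseteq> Ag \<Longrightarrow> E \<subseteq> Ag \<Longrightarrow> C \<inter> E = {} \<Longrightarrow>
       derivable Ag X D (Imp (And (Box C p) (Box E q)) (Box (C \<union> E) (And p q)))"
| C5: "wf Ag X D p \<Longrightarrow>
       derivable Ag X D (Imp (Neg (Box {} (Neg p))) (Box Ag p))"
| V1: "x \<in> X \<Longrightarrow> set cs = D x \<Longrightarrow> derivable Ag X D (disj_eq x cs)"
| V2: "x \<in> X \<Longrightarrow> c \<in> D x \<Longrightarrow> d \<in> D x \<Longrightarrow> c \<noteq> d \<Longrightarrow>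
       derivable Ag X D (Imp (Eq x c) (Neg (Eq x d)))"
| MP: "derivable Ag X D (Imp p q) \<Longrightarrow> derivable Ag X D p \<Longrightarrow> derivable Ag X D q"
| RE: "derivable Ag X D (Iff p q) \<Longrightarrow> C \<subseteq> Ag \<Longrightarrow>
       derivable Ag X D (Iff (Box C p) (Box C q))"

end

theory Submission
  imports Defs
begin

primrec conjs :: "('a,'x,'v) fm list \<Rightarrow> ('a,'x,'v) fm" where
  "conjs [] = Top"
| "conjs (p # L) = And p (conjs L)"

lemma peval_conjs[simp]: "peval V (conjs L) = (\<forall>p\<in>set L. peval V p)"
  by (induction L) auto

lemma wf_conjs[simp]: "wf Ag X D (conjs L) = (\<forall>p\<in>set L. wf Ag X D p)"
  by (induction L) auto

lemma peval_simps[simp]: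
  "peval V Bot = False"
  "peval V (Or p q) = (peval V p \<or> peval V q)"
  "peval V (Imp p q) = (peval V p \<longrightarrow> peval V q)"
  "peval V (Iff p q) = (peval V p \<longleftrightarrow> peval V q)"
  by (auto simp: Bot_def Or_def Imp_def Iff_def)

lemma wf_simps[simp]:
  "wf Ag X D Bot"
  "wf Ag X D (Or p q) = (wf Ag X D p \<and> wf Ag X D q)"
  "wf Ag X D (Imp p q) = (wf Ag X D p \<and> wf Ag X D q)"
  "wf Ag X D (Iff p q) = (wf Ag X D p \<and> wf Ag X D q)"
  by (auto simp: Bot_def Or_def Imp_def Iff_def)

lemma wf_disj_eq: "x \<in> X \<Longrightarrow> set cs \<subseteq> D x \<Longrightarrow> wf Ag X D (disj_eq x cs)"
  by (induction cs) auto

lemma derivable_wf: "derivable Ag X D p \<Longrightarrow> wf Ag X D p"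
  by (induction rule: derivable.induct) (auto simp: wf_disj_eq)

lemma derive_prop:
  "\<forall>p\<in>set L. derivable Ag X D p \<Longrightarrow> wf Ag X D q \<Longrightarrow>
   (\<forall>V. (\<forall>p\<in>set L. peval V p) \<longrightarrow> peval V q) \<Longrightarrow> derivable Ag X D q"
proof (induction L arbitrary: q)
  case Nil
  then show ?case by (auto intro: derivable.Taut simp: taut_def)
next
  case (Cons p L)
  have "derivable Ag X D (Imp p q)"
    using Cons by (intro Cons.IH) (auto dest: derivable_wf)
  then show ?case using Cons.prems by (auto intro: derivable.MP)
qed

primrec ev :: "('x \<Rightarrow> 'v) \<Rightarrow> ('a,'x,'v) fm \<Rightarrow> bool" where
  "ev f Top = True"
| "ev f (Eq x c) = (f x = c)"
| "ev f (Neg p) = (\<not> ev f p)"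
| "ev f (And p q) = (ev f p \<and> ev f q)"
| "ev f (Box C p) = ev f p"

lemma peval_ev: "peval (ev f) p = ev f p"
  by (induction p) auto

lemma ev_simps[simp]:
  "ev f Bot = False"
  "ev f (Or p q) = (ev f p \<or> ev f q)"
  "ev f (Imp p q) = (ev f p \<longrightarrow> ev f q)"
  "ev f (Iff p q) = (ev f p \<longleftrightarrow> ev f q)"
  by (auto simp: Bot_def Or_def Imp_def Iff_def)

lemma ev_disj_eq: "ev f (disj_eq x cs) = (f x \<in> set cs)"
  by (induction cs) auto

lemma derivable_ev:
  assumes "derivable Ag X D p" "\<forall>x\<in>X. f x \<in> D x"
  shows "ev f p"
  using assms
proof (induction rule: derivable.induct)
  case (Taut p) then show ?case by (metis peval_ev taut_def)
qed (auto simp: ev_disj_eq)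

locale vcl =
  fixes Ag :: "'a set" and X :: "'x set" and D :: "'x \<Rightarrow> 'v set"
  assumes sig: "signature Ag X D"
begin

abbreviation "dv \<equiv> derivable Ag X D"
abbreviation "wff \<equiv> wf Ag X D"

definition cons :: "('a,'x,'v) fm set \<Rightarrow> bool" where
  "cons G \<longleftrightarrow> (\<forall>L. set L \<subseteq> G \<longrightarrow> \<not> dv (Neg (conjs L)))"

definition mcs :: "('a,'x,'v) fm set \<Rightarrow> bool" where
  "mcs M \<longleftrightarrow> (\<forall>p\<in>M. wff p) \<and> cons M \<and> (\<forall>p. wff p \<longrightarrow> p \<in> M \<or> Neg p \<in> M)"

lemma mcs_wf: "mcs M \<Longrightarrow> p \<in> M \<Longrightarrow> wff p"
  by (auto simp: mcs_def)

lemma mcs_prop: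
  assumes M: "mcs M" and L: "set L \<subseteq> M" and Ds: "\<forall>d\<in>set Ds. dv d" and q: "wff q"
    and T: "\<forall>V. (\<forall>p\<in>set L. peval V p) \<and> (\<forall>d\<in>set Ds. peval V d) \<longrightarrow> peval V q"
  shows "q \<in> M"
proof (rule ccontr)
  assume "q \<notin> M"
  with M q have nq: "Neg q \<in> M" by (auto simp: mcs_def)
  have "dv (Neg (conjs (Neg q # L)))"
    apply (rule derive_prop[OF Ds])
    using L M q T by (auto simp: mcs_def)
  moreover have "set (Neg q # L) \<subseteq> M" using L nq by auto
  ultimately show False using M unfolding mcs_def cons_def by blast
qed

lemma mcs_deriv: "mcs M \<Longrightarrow> dv p \<Longrightarrow> p \<in> M"
  by (rule mcs_prop[of M "[]" "[p]"]) (auto dest: derivable_wf)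

lemma mcs_neg: "mcs M \<Longrightarrow> wff p \<Longrightarrow> Neg p \<in> M \<longleftrightarrow> p \<notin> M"
proof
  assume M: "mcs M" and "wff p" "Neg p \<in> M"
  show "p \<notin> M"
  proof
    assume "p \<in> M"
    have "dv (Neg (conjs [p, Neg p]))" using \<open>wff p\<close>
      by (intro derive_prop[of "[]"]) auto
    moreover have "set [p, Neg p] \<subseteq> M" using \<open>p \<in> M\<close> \<open>Neg p \<in> M\<close> by auto
    ultimately show False using M unfolding mcs_def cons_def by blast
  qed
qed (auto simp: mcs_def)

lemma mcs_and: "mcs M \<Longrightarrow> wff p \<Longrightarrow> wff q \<Longrightarrow> And p q \<in> M \<longleftrightarrow> p \<in> M \<and> q \<in> M"
proof (intro iffI conjI)
  assume "mcs M" "wff p" "wff q" "And p q \<in> M"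
  then show "p \<in> M" "q \<in> M" by (auto intro: mcs_prop[of M "[And p q]" "[]"])
next
  assume "mcs M" "wff p" "wff q" "p \<in> M \<and> q \<in> M"
  then show "And p q \<in> M" by (auto intro: mcs_prop[of M "[p, q]" "[]"])
qed

lemma lindenbaum:
  assumes c: "cons G" and w: "\<forall>p\<in>G. wff p"
  shows "\<exists>M. mcs M \<and> G \<subseteq> M"
proof -
  define A where "A = {H. G \<subseteq> H \<and> (\<forall>p\<in>H. wff p) \<and> cons H}"
  have "\<exists>M\<in>A. \<forall>Y\<in>A. M \<subseteq> Y \<longrightarrow> Y = M"
  proof (rule subset_Zorn_nonempty)
    show "A \<noteq> {}" using c w by (auto simp: A_def)
  next
    fix CC assume ne: "CC \<noteq> {}" and ch: "subset.chain A CC"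
    have sub: "CC \<subseteq> A" using ch by (auto simp: subset.chain_def)
    show "\<Union>CC \<in> A"
      unfolding A_def
    proof (intro CollectI conjI)
      show "G \<subseteq> \<Union> CC" using ne sub by (auto simp: A_def)
      show "\<forall>p\<in>\<Union> CC. wff p" using sub by (auto simp: A_def)
      show "cons (\<Union> CC)" unfolding cons_def
      proof (intro allI impI)
        fix L assume L: "set L \<subseteq> \<Union>CC"
        show "\<not> dv (Neg (conjs L))"
        proof (cases "set L = {}")
          case True
          obtain H where "H \<in> CC" using ne by auto
          then have "cons H" using sub by (auto simp: A_def)
          then show ?thesis using True unfolding cons_def by (metis empty_subsetI)
        next
          case False
          obtain H where "H \<in> CC" "set L \<subseteq> H"
            using finite_subset_Union_chain[OF _ L ne ch] by auto
          then show ?thesis using sub by (auto simp: A_def cons_def)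
        qed
      qed
    qed
  qed
  then obtain M where MA: "M \<in> A" and max: "\<forall>Y\<in>A. M \<subseteq> Y \<longrightarrow> Y = M" by blast
  have "wff p \<Longrightarrow> p \<in> M \<or> Neg p \<in> M" for p
  proof (rule ccontr)
    assume p: "wff p" and n: "\<not> (p \<in> M \<or> Neg p \<in> M)"
    have "\<not> cons (insert p M)"
    proof
      assume "cons (insert p M)"
      then have "insert p M \<in> A" using MA p by (auto simp: A_def)
      then show False using max n by auto
    qed
    then obtain L1 where L1: "set L1 \<subseteq> insert p M" "dv (Neg (conjs L1))" by (auto simp: cons_def)
    have "\<not> cons (insert (Neg p) M)"
    proof
      assume "cons (insert (Neg p) M)"
      then have "insert (Neg p) M \<in> A" using MA p by (auto simp: A_def)
      then show False using max n by auto
    qed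
    then obtain L2 where L2: "set L2 \<subseteq> insert (Neg p) M" "dv (Neg (conjs L2))" by (auto simp: cons_def)
    let ?L = "filter (\<lambda>q. q \<noteq> p) L1 @ filter (\<lambda>q. q \<noteq> Neg p) L2"
    have sL: "set ?L \<subseteq> M" using L1 L2 by auto
    have Mw: "\<forall>q\<in>M. wff q" using MA by (simp add: A_def)
    have "dv (Neg (conjs ?L))"
    proof (rule derive_prop[of "[Neg (conjs L1), Neg (conjs L2)]"])
      show "\<forall>q\<in>set [Neg (conjs L1), Neg (conjs L2)]. dv q" using L1 L2 by auto
      show "wff (Neg (conjs ?L))" unfolding wf.simps wf_conjs using sL Mw by blast
      show "\<forall>V. (\<forall>q\<in>set [Neg (conjs L1), Neg (conjs L2)]. peval V q) \<longrightarrow> peval V (Neg (conjs ?L))"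
      proof (intro allI impI)
        fix V assume "\<forall>q\<in>set [Neg (conjs L1), Neg (conjs L2)]. peval V q"
        then obtain a b where a: "a \<in> set L1" "\<not> peval V a" and b: "b \<in> set L2" "\<not> peval V b"
          by auto
        show "peval V (Neg (conjs ?L))"
        proof (cases "a = p \<and> b = Neg p")
          case True then show ?thesis using a b by simp
        next
          case False then show ?thesis using a b by auto
        qed
      qed
    qed
    then show False using sL MA unfolding A_def cons_def by blast
  qed
  then have "mcs M" using MA by (auto simp: A_def mcs_def)
  then show ?thesis using MA by (auto simp: A_def)
qed

end

context vcl begin

lemma box_mono_fm:
  assumes M: "mcs M" and d: "dv (Imp p q)" and b: "Box C p \<in> M" and C: "C \<subseteq> Ag"
  shows "Box C q \<in> M"
proof -
  have w: "wff p" "wff q" using derivable_wf[OF d] by auto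
  have d1: "dv (Iff p (And q p))" using d w by (intro derive_prop[of "[Imp p q]"]) auto
  have d2: "dv (Iff (Box C p) (Box C (And q p)))" using derivable.RE[OF d1 C] .
  have d3: "dv (Imp (Box C (And q p)) (Box C q))" using derivable.C1[OF w(2) w(1) C] .
  show ?thesis
    by (rule mcs_prop[OF M, of "[Box C p]" "[Iff (Box C p) (Box C (And q p)), Imp (Box C (And q p)) (Box C q)]"])
      (use b d2 d3 w C in auto)
qed

lemma box_mono_coal:
  assumes M: "mcs M" and CE: "C \<subseteq> E" and E: "E \<subseteq> Ag" and b: "Box C p \<in> M"
  shows "Box E p \<in> M"
proof -
  have w: "wff p" using mcs_wf[OF M b] by simp
  have d: "dv (Imp (And (Box C p) (Box (E - C) Top)) (Box (C \<union> (E - C)) (And p Top)))"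
    by (rule derivable.C4) (use w CE E in auto)
  have e: "C \<union> (E - C) = E" using CE by auto
  have d3: "dv (Box (E - C) Top)" by (rule derivable.C3) (use E in auto)
  have d': "dv (Imp (And (Box C p) (Box (E - C) Top)) (Box E (And p Top)))" using d e by simp
  have "Box E (And p Top) \<in> M"
    by (rule mcs_prop[OF M, of "[Box C p]" "[Imp (And (Box C p) (Box (E - C) Top)) (Box E (And p Top)), Box (E - C) Top]"])
      (use b d' d3 w E in simp_all)
  moreover have "dv (Imp (And p Top) p)" using w by (intro derive_prop[of "[]"]) auto
  ultimately show ?thesis using box_mono_fm[OF M _ _ E] by blast
qed

lemma box_and:
  assumes M: "mcs M" and a: "Box A p \<in> M" and b: "Box B q \<in> M" and "A \<subseteq> Ag" "B \<subseteq> Ag" "A \<inter> B = {}"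
  shows "Box (A \<union> B) (And p q) \<in> M"
proof -
  have w: "wff p" "wff q" using mcs_wf[OF M a] mcs_wf[OF M b] by auto
  have d: "dv (Imp (And (Box A p) (Box B q)) (Box (A \<union> B) (And p q)))"
    by (rule derivable.C4) (use w assms in auto)
  show ?thesis
    by (rule mcs_prop[OF M, of "[Box A p, Box B q]" "[Imp (And (Box A p) (Box B q)) (Box (A \<union> B) (And p q))]"])
      (use a b d w assms in auto)
qed

lemma box_not_bot:
  assumes M: "mcs M" and d: "dv (Neg p)" and C: "C \<subseteq> Ag"
  shows "Box C p \<notin> M"
proof
  assume b: "Box C p \<in> M"
  have w: "wff p" using derivable_wf[OF d] by simp
  have "dv (Imp p Bot)" using d w by (intro derive_prop[of "[Neg p]"]) auto
  then have "Box C Bot \<in> M" using box_mono_fm[OF M _ b C] by blast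
  moreover have "Neg (Box C Bot) \<in> M" using mcs_deriv[OF M derivable.C2[OF C]] .
  ultimately show False using mcs_neg[OF M, of "Box C Bot"] C by auto
qed

lemma box_C5:
  assumes M: "mcs M" and w: "wff p" and n: "Box Ag p \<notin> M"
  shows "Box {} (Neg p) \<in> M"
proof -
  have "Neg (Box Ag p) \<in> M" using n mcs_neg[OF M, of "Box Ag p"] w by auto
  moreover have "dv (Imp (Neg (Box {} (Neg p))) (Box Ag p))" using derivable.C5[OF w] .
  ultimately show ?thesis
    by (intro mcs_prop[OF M, of "[Neg (Box Ag p)]" "[Imp (Neg (Box {} (Neg p))) (Box Ag p)]"]) (use w in auto)
qed

lemma disj_eq_mem:
  "mcs M \<Longrightarrow> x \<in> X \<Longrightarrow> set cs \<subseteq> D x \<Longrightarrow> disj_eq x cs \<in> M \<Longrightarrow> \<exists>c\<in>set cs. Eq x c \<in> M"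
proof (induction cs)
  case Nil
  have "Top \<in> M" by (rule mcs_deriv[OF Nil(1)]) (auto intro: derivable.Taut simp: taut_def)
  then show ?case using Nil mcs_neg[OF Nil(1), of Top] by (simp add: Bot_def)
next
  case (Cons c cs)
  show ?case
  proof (cases "Eq x c \<in> M")
    case False
    then have "Neg (Eq x c) \<in> M" using Cons.prems mcs_neg[OF Cons.prems(1), of "Eq x c"] by auto
    then have "disj_eq x cs \<in> M"
      using Cons.prems by (intro mcs_prop[OF Cons.prems(1), of "[Neg (Eq x c), Or (Eq x c) (disj_eq x cs)]" "[]"])
        (auto simp: wf_disj_eq)
    then show ?thesis using Cons by auto
  qed auto
qed

lemma eq_exists: "mcs M \<Longrightarrow> x \<in> X \<Longrightarrow> \<exists>c\<in>D x. Eq x c \<in> M"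
proof -
  assume M: "mcs M" and x: "x \<in> X"
  obtain cs where cs: "set cs = D x" using sig x finite_list unfolding signature_def by metis
  have "disj_eq x cs \<in> M" using mcs_deriv[OF M derivable.V1[of x X cs D Ag, OF x cs]] .
  then show ?thesis using disj_eq_mem[OF M x] cs by auto
qed

lemma eq_unique: "mcs M \<Longrightarrow> x \<in> X \<Longrightarrow> c \<in> D x \<Longrightarrow> d \<in> D x \<Longrightarrow> Eq x c \<in> M \<Longrightarrow> Eq x d \<in> M \<Longrightarrow> c = d"
proof (rule ccontr)
  assume M: "mcs M" and h: "x \<in> X" "c \<in> D x" "d \<in> D x" "Eq x c \<in> M" "Eq x d \<in> M" "c \<noteq> d"
  have "Neg (Eq x d) \<in> M"
    using derivable.V2[of x X c D d Ag, OF h(1-3) h(6)] h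
    by (intro mcs_prop[OF M, of "[Eq x c]" "[Imp (Eq x c) (Neg (Eq x d))]"]) auto
  then show False using mcs_neg[OF M, of "Eq x d"] h by auto
qed

lemma cons_empty: "cons {}"
proof -
  define f where "f = (\<lambda>x. SOME c. c \<in> D x)"
  have "\<forall>x\<in>X. f x \<in> D x" using sig unfolding signature_def f_def by (metis all_not_in_conv someI)
  then have "\<not> dv (Neg (conjs []))" using derivable_ev[where p="Neg (conjs [])" and f=f and Ag=Ag and X=X and D=D] by auto
  then show ?thesis by (auto simp: cons_def)
qed

end

definition enc :: "('a,'x,'v) fm \<times> nat \<times> ('a,'x,'v) fm set \<Rightarrow> ('a,'x,'v) fm set" where
  "enc a = insert (Box {} (And (fst a) ((Neg^^(fst (snd a))) Top))) (Neg ` snd (snd a))"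

definition dprop :: "('a,'x,'v) fm set \<Rightarrow> ('a,'x,'v) fm" where
  "dprop S = (THE \<psi>. \<exists>k. Box {} (And \<psi> ((Neg^^k) Top)) \<in> S)"
definition dk :: "('a,'x,'v) fm set \<Rightarrow> nat" where
  "dk S = (THE k. \<exists>\<psi>. Box {} (And \<psi> ((Neg^^k) Top)) \<in> S)"
definition du :: "('a,'x,'v) fm set \<Rightarrow> ('a,'x,'v) fm set" where
  "du S = {p. Neg p \<in> S}"

lemma negs_inj: "(Neg^^k) Top = (Neg^^k') Top \<Longrightarrow> k = k'"
proof (induction k arbitrary: k')
  case 0 then show ?case by (cases k') auto
next
  case (Suc k) then show ?case by (cases k') auto
qed

lemma negs_new: "finite (F::('a,'x,'v) fm set) \<Longrightarrow> \<exists>m. (Neg^^(2*m)) Top \<notin> F"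
proof (rule ccontr)
  assume F: "finite F" and "\<not> (\<exists>m. (Neg^^(2*m)) Top \<notin> F)"
  then have "range (\<lambda>m. (Neg^^(2*m)) Top) \<subseteq> F" by auto
  then have "finite (range (\<lambda>m. (Neg^^(2*m)) (Top::('a,'x,'v) fm)))" using F finite_subset by blast
  moreover have "inj (\<lambda>m::nat. (Neg^^(2*m)) (Top::('a,'x,'v) fm))"
  proof (rule injI)
    fix a b :: nat assume "(Neg^^(2*a)) Top = (Neg^^(2*b)) (Top::('a,'x,'v) fm)"
    then have "2*a = 2*b" by (rule negs_inj)
    then show "a = b" by simp
  qed
  ultimately have "finite (UNIV::nat set)" using finite_imageD by blast
  then show False by simp
qed

lemma enc_mem: "Box {} (And \<psi>' ((Neg^^k') Top)) \<in> enc (\<psi>, k, u) \<longleftrightarrow> \<psi>' = \<psi> \<and> k' = k"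
  by (auto simp: enc_def dest: negs_inj)

lemma dec_enc[simp]: "dprop (enc (\<psi>, k, u)) = \<psi>" "dk (enc (\<psi>, k, u)) = k" "du (enc (\<psi>, k, u)) = u"
  by (auto simp: dprop_def dk_def du_def enc_mem) (auto simp: enc_def)

lemma taut_negs: "peval V ((Neg^^(2*m)) Top)"
  by (induction m) auto

lemma wf_negs: "wf Ag X D ((Neg^^k) Top)"
  by (induction k) auto

context vcl begin

definition Gam :: "('a,'x,'v) fm set \<Rightarrow> ('a,'x,'v) fm set" where
  "Gam s = {\<chi>. Box {} \<chi> \<in> s}"

definition Eff :: "('a,'x,'v) fm set \<Rightarrow> ('a \<Rightarrow> ('a,'x,'v) fm) \<Rightarrow> 'a set \<Rightarrow> ('a,'x,'v) fm set" where
  "Eff s pr B = {pr i | i. i \<in> B \<and> Box {j\<in>B. pr j = pr i} (pr i) \<in> s}"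

lemma comb_distinct:
  assumes M: "mcs s"
  shows "distinct L \<Longrightarrow> \<forall>p\<in>set L. A p \<subseteq> Ag \<and> Box (A p) p \<in> s \<Longrightarrow>
    \<forall>p\<in>set L. \<forall>q\<in>set L. p \<noteq> q \<longrightarrow> A p \<inter> A q = {} \<Longrightarrow>
    Box (\<Union>p\<in>set L. A p) (conjs L) \<in> s"
proof (induction L)
  case Nil
  then show ?case using mcs_deriv[OF M derivable.C3[of "{}" Ag X D]] by simp
next
  case (Cons p L)
  have IH: "Box (\<Union>p\<in>set L. A p) (conjs L) \<in> s" using Cons by auto
  have "Box (A p \<union> (\<Union>p\<in>set L. A p)) (And p (conjs L)) \<in> s"
    by (rule box_and[OF M]) (use Cons IH in auto)
  then show ?case by simp
qed

lemma Gam_wf: "mcs s \<Longrightarrow> p \<in> Gam s \<Longrightarrow> wff p"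
  using mcs_wf by (fastforce simp: Gam_def)

lemma Eff_wf: "mcs s \<Longrightarrow> p \<in> Eff s pr B \<Longrightarrow> wff p"
  using mcs_wf by (fastforce simp: Eff_def)

lemma comb:
  assumes M: "mcs s" and BE: "B \<subseteq> E" and E: "E \<subseteq> Ag" and L: "set L \<subseteq> Gam s \<union> Eff s pr B"
  shows "Box E (conjs L) \<in> s"
proof -
  define A where "A p = (if \<exists>i\<in>B. pr i = p \<and> Box {j\<in>B. pr j = p} p \<in> s then {j\<in>B. pr j = p} else {})" for p
  let ?L = "remdups L"
  have 1: "\<forall>p\<in>set ?L. A p \<subseteq> Ag \<and> Box (A p) p \<in> s"
  proof
    fix p assume "p \<in> set ?L"
    then have "p \<in> Gam s \<union> Eff s pr B" using L by auto
    then show "A p \<subseteq> Ag \<and> Box (A p) p \<in> s"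
      unfolding A_def Gam_def Eff_def using BE E by auto
  qed
  have 2: "\<forall>p\<in>set ?L. \<forall>q\<in>set ?L. p \<noteq> q \<longrightarrow> A p \<inter> A q = {}"
    unfolding A_def by auto
  have "Box (\<Union>p\<in>set ?L. A p) (conjs ?L) \<in> s"
    using comb_distinct[OF M, of ?L A] 1 2 by simp
  moreover have "(\<Union>p\<in>set ?L. A p) \<subseteq> E" using BE unfolding A_def by auto
  ultimately have 3: "Box E (conjs ?L) \<in> s" using box_mono_coal[OF M _ E] by blast
  have w: "\<forall>p\<in>set L. wff p" using L Gam_wf[OF M] Eff_wf[OF M] by blast
  have "dv (Imp (conjs ?L) (conjs L))" using w by (intro derive_prop[of "[]"]) auto
  then show ?thesis using box_mono_fm[OF M _ 3 E] by blast
qed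

definition outc :: "('a,'x,'v) fm set \<Rightarrow> ('a \<Rightarrow> ('a,'x,'v) fm set) \<Rightarrow> ('a,'x,'v) fm set" where
  "outc s \<sigma> = (let F = Gam s \<union> Eff s (\<lambda>i. dprop (\<sigma> i)) Ag in
     if \<exists>j\<in>Ag. (\<forall>i\<in>Ag. i \<noteq> j \<longrightarrow> dk (\<sigma> i) < dk (\<sigma> j)) \<and> mcs (du (\<sigma> j)) \<and> F \<subseteq> du (\<sigma> j)
     then du (\<sigma> (SOME j. j\<in>Ag \<and> (\<forall>i\<in>Ag. i \<noteq> j \<longrightarrow> dk (\<sigma> i) < dk (\<sigma> j)) \<and> mcs (du (\<sigma> j)) \<and> F \<subseteq> du (\<sigma> j)))
     else (SOME t. mcs t \<and> F \<subseteq> t))"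

lemma F_cons: "mcs s \<Longrightarrow> cons (Gam s \<union> Eff s pr Ag)"
  unfolding cons_def
proof (intro allI impI notI)
  fix L assume M: "mcs s" and L: "set L \<subseteq> Gam s \<union> Eff s pr Ag" and d: "dv (Neg (conjs L))"
  have "Box Ag (conjs L) \<in> s" using comb[OF M _ _ L] by blast
  then show False using box_not_bot[OF M d] by blast
qed

lemma outc_mcs:
  assumes M: "mcs s"
  shows "mcs (outc s \<sigma>) \<and> Gam s \<union> Eff s (\<lambda>i. dprop (\<sigma> i)) Ag \<subseteq> outc s \<sigma>"
proof -
  let ?F = "Gam s \<union> Eff s (\<lambda>i. dprop (\<sigma> i)) Ag"
  let ?P = "\<lambda>j. j\<in>Ag \<and> (\<forall>i\<in>Ag. i \<noteq> j \<longrightarrow> dk (\<sigma> i) < dk (\<sigma> j)) \<and> mcs (du (\<sigma> j)) \<and> ?F \<subseteq> du (\<sigma> j)"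
  show ?thesis
  proof (cases "\<exists>j. ?P j")
    case True
    then have "?P (SOME j. ?P j)" by (rule someI_ex)
    moreover have "outc s \<sigma> = du (\<sigma> (SOME j. ?P j))" using True unfolding outc_def Let_def by auto
    ultimately show ?thesis by simp
  next
    case False
    have "\<exists>t. mcs t \<and> ?F \<subseteq> t"
      using lindenbaum[OF F_cons[OF M]] Gam_wf[OF M] Eff_wf[OF M] by blast
    then have "mcs (SOME t. mcs t \<and> ?F \<subseteq> t) \<and> ?F \<subseteq> (SOME t. mcs t \<and> ?F \<subseteq> t)" by (rule someI_ex)
    moreover have "outc s \<sigma> = (SOME t. mcs t \<and> ?F \<subseteq> t)" using False unfolding outc_def Let_def by auto
    ultimately show ?thesis by simp
  qed
qed

lemma outc_win:
  assumes j: "j \<in> Ag" "\<forall>i\<in>Ag. i \<noteq> j \<longrightarrow> dk (\<sigma> i) < dk (\<sigma> j)" "mcs (du (\<sigma> j))"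
    "Gam s \<union> Eff s (\<lambda>i. dprop (\<sigma> i)) Ag \<subseteq> du (\<sigma> j)"
  shows "outc s \<sigma> = du (\<sigma> j)"
proof -
  let ?F = "Gam s \<union> Eff s (\<lambda>i. dprop (\<sigma> i)) Ag"
  let ?P = "\<lambda>j. j\<in>Ag \<and> (\<forall>i\<in>Ag. i \<noteq> j \<longrightarrow> dk (\<sigma> i) < dk (\<sigma> j)) \<and> mcs (du (\<sigma> j)) \<and> ?F \<subseteq> du (\<sigma> j)"
  have "?P j" using j by blast
  have u: "?P j' \<Longrightarrow> j' = j" for j' using j by force
  have "(SOME j. ?P j) = j" using \<open>?P j\<close> u by (rule some_equality)
  then show ?thesis using \<open>?P j\<close> unfolding outc_def Let_def by (auto intro!: bexI[of _ j])
qed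

end

context vcl begin

definition Sg :: "'a \<Rightarrow> ('a,'x,'v) fm set set" where "Sg i = range enc"
definition vl :: "('a,'x,'v) fm set \<Rightarrow> 'x \<Rightarrow> 'v" where
  "vl s x = (SOME c. c \<in> D x \<and> Eq x c \<in> s)"

lemma vl_prop: "mcs s \<Longrightarrow> x \<in> X \<Longrightarrow> vl s x \<in> D x \<and> Eq x (vl s x) \<in> s"
proof -
  assume "mcs s" "x \<in> X"
  then have "\<exists>c. c \<in> D x \<and> Eq x c \<in> s" using eq_exists by blast
  then show ?thesis unfolding vl_def by (rule someI_ex)
qed

lemma enc_Sg: "enc a \<in> Sg i" by (simp add: Sg_def)

lemma merge_in: "i \<in> C \<Longrightarrow> merge C \<alpha> \<beta> i = \<alpha> i" "i \<notin> C \<Longrightarrow> merge C \<alpha> \<beta> i = \<beta> i"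
  by (auto simp: merge_def)

lemma neg_cons:
  assumes M: "mcs s" and C: "C \<subseteq> Ag" and w: "wff \<phi>" and n: "Box C \<phi> \<notin> s"
  shows "cons (Gam s \<union> Eff s pr C \<union> {Neg \<phi>})"
  unfolding cons_def
proof (intro allI impI notI)
  fix L assume L: "set L \<subseteq> Gam s \<union> Eff s pr C \<union> {Neg \<phi>}" and d: "dv (Neg (conjs L))"
  let ?L = "filter (\<lambda>p. p \<noteq> Neg \<phi>) L"
  have sL: "set ?L \<subseteq> Gam s \<union> Eff s pr C" using L by auto
  have b: "Box C (conjs ?L) \<in> s" using comb[OF M _ C sL] by blast
  have wL: "\<forall>p\<in>set ?L. wff p" using sL Gam_wf[OF M] Eff_wf[OF M] by blast
  have "dv (Imp (conjs ?L) \<phi>)"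
  proof (rule derive_prop[of "[Neg (conjs L)]"])
    show "\<forall>p\<in>set [Neg (conjs L)]. dv p" using d by simp
    show "wff (Imp (conjs ?L) \<phi>)" using wL w by simp
    show "\<forall>V. (\<forall>p\<in>set [Neg (conjs L)]. peval V p) \<longrightarrow> peval V (Imp (conjs ?L) \<phi>)"
      by auto
  qed
  then have "Box C \<phi> \<in> s" using box_mono_fm[OF M _ b C] by blast
  then show False using n by simp
qed

lemma truth: "wff \<phi> \<Longrightarrow> mcs s \<Longrightarrow> sat Ag Sg outc vl s \<phi> \<longleftrightarrow> \<phi> \<in> s"
proof (induction \<phi> arbitrary: s)
  case Top
  have "Top \<in> s" by (rule mcs_deriv[OF Top(2)]) (auto intro: derivable.Taut simp: taut_def)
  then show ?case by simp
next
  case (Eq x c)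
  then have x: "x \<in> X" "c \<in> D x" by auto
  have v: "vl s x \<in> D x" "Eq x (vl s x) \<in> s" using vl_prop[OF Eq(2) x(1)] by auto
  show ?case
  proof
    assume "sat Ag Sg outc vl s (Eq x c)" then show "Eq x c \<in> s" using v by simp
  next
    assume "Eq x c \<in> s" then show "sat Ag Sg outc vl s (Eq x c)"
      using eq_unique[OF Eq(2) x(1) v(1) x(2) v(2)] by simp
  qed
next
  case (Neg \<phi>)
  then show ?case using mcs_neg[OF Neg(3)] by simp
next
  case (And \<phi> \<psi>)
  then show ?case using mcs_and[OF And(4)] by simp
next
  case (Box C \<phi>)
  have M: "mcs s" and C: "C \<subseteq> Ag" and w: "wff \<phi>" using Box.prems by auto
  have IH: "sat Ag Sg outc vl (outc s \<sigma>) \<phi> \<longleftrightarrow> \<phi> \<in> outc s \<sigma>" for \<sigma>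
    using Box.IH[OF w] outc_mcs[OF M] by blast
  have finAg: "finite Ag" using sig by (simp add: signature_def)
  show ?case
  proof
    assume "Box C \<phi> \<in> s"
    define \<alpha> where "\<alpha> = restrict (\<lambda>i. enc (\<phi>, 0, {})) C"
    have \<alpha>: "\<alpha> \<in> PiE C Sg" unfolding \<alpha>_def by (simp add: enc_Sg)
    have "\<forall>\<beta>\<in>PiE (Ag - C) Sg. sat Ag Sg outc vl (outc s (merge C \<alpha> \<beta>)) \<phi>"
    proof
      fix \<beta> assume "\<beta> \<in> PiE (Ag - C) Sg"
      let ?\<sigma> = "merge C \<alpha> \<beta>"
      let ?pr = "\<lambda>i. dprop (?\<sigma> i)"
      have "\<phi> \<in> Gam s \<union> Eff s ?pr Ag"
      proof (cases "C = {}")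
        case True then show ?thesis using \<open>Box C \<phi> \<in> s\<close> by (simp add: Gam_def)
      next
        case False
        then obtain i where i: "i \<in> C" by auto
        have pri: "?pr j = \<phi>" if "j \<in> C" for j using that by (simp add: merge_in \<alpha>_def)
        have "C \<subseteq> {j\<in>Ag. ?pr j = ?pr i}" using pri i C by auto
        then have "Box {j\<in>Ag. ?pr j = ?pr i} (?pr i) \<in> s"
          using box_mono_coal[OF M _ _ \<open>Box C \<phi> \<in> s\<close>] pri[OF i] by auto
        then have "?pr i \<in> Eff s ?pr Ag" unfolding Eff_def using i C by blast
        then show ?thesis using pri[OF i] by simp
      qed
      then have "\<phi> \<in> outc s ?\<sigma>" using outc_mcs[OF M, of ?\<sigma>] by blast
      then show "sat Ag Sg outc vl (outc s ?\<sigma>) \<phi>" using IH by blast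
    qed
    then show "sat Ag Sg outc vl s (Box C \<phi>)" using \<alpha> by auto
  next
    assume sat: "sat Ag Sg outc vl s (Box C \<phi>)"
    show "Box C \<phi> \<in> s"
    proof (rule ccontr)
      assume n: "Box C \<phi> \<notin> s"
      from sat obtain \<alpha> where \<alpha>: "\<alpha> \<in> PiE C Sg"
        and all: "\<forall>\<beta>\<in>PiE (Ag - C) Sg. sat Ag Sg outc vl (outc s (merge C \<alpha> \<beta>)) \<phi>" by auto
      show False
      proof (cases "C = Ag")
        case True
        have b: "Box {} (Neg \<phi>) \<in> s" using box_C5[OF M w] n True by simp
        define \<beta> where "\<beta> = restrict (\<lambda>i. enc (Top::('a,'x,'v) fm, 0, {})) (Ag - C)"
        have "\<beta> \<in> PiE (Ag - C) Sg" unfolding \<beta>_def by (simp add: enc_Sg)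
        then have "\<phi> \<in> outc s (merge C \<alpha> \<beta>)" using all IH by blast
        moreover have "Neg \<phi> \<in> outc s (merge C \<alpha> \<beta>)" using outc_mcs[OF M, of "merge C \<alpha> \<beta>"] b
          by (auto simp: Gam_def)
        ultimately show False using mcs_neg[OF conjunct1[OF outc_mcs[OF M]] w] by blast
      next
        case False
        then obtain j where j: "j \<in> Ag" "j \<notin> C" using C by auto
        let ?pa = "\<lambda>i. dprop (\<alpha> i)"
        obtain t where t: "mcs t" "Gam s \<union> Eff s ?pa C \<union> {Neg \<phi>} \<subseteq> t"
        proof -
          have "\<forall>p\<in>Gam s \<union> Eff s ?pa C \<union> {Neg \<phi>}. wff p"
            using Gam_wf[OF M] Eff_wf[OF M] w by auto
          then show ?thesis using lindenbaum[OF neg_cons[OF M C w n, of ?pa]] that by blast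
        qed
        have finC: "finite C" using finAg C finite_subset by blast
        obtain m where m: "(Neg^^(2*m)) Top \<notin> ?pa ` C" using negs_new[of "?pa ` C"] finC by blast
        define P where "P = (Neg^^(2*m)) (Top::('a,'x,'v) fm)"
        define K where "K = Suc (\<Sum>i\<in>C. dk (\<alpha> i))"
        define \<beta> where "\<beta> = restrict (\<lambda>i. if i = j then enc (P, K, t) else enc (P, 0, t)) (Ag - C)"
        have \<beta>: "\<beta> \<in> PiE (Ag - C) Sg" unfolding \<beta>_def by (simp add: enc_Sg)
        let ?\<sigma> = "merge C \<alpha> \<beta>"
        let ?pr = "\<lambda>i. dprop (?\<sigma> i)"
        have sC: "i \<in> C \<Longrightarrow> ?\<sigma> i = \<alpha> i" for i by (simp add: merge_in)
        have sO: "i \<in> Ag \<Longrightarrow> i \<notin> C \<Longrightarrow> ?\<sigma> i = (if i = j then enc (P, K, t) else enc (P, 0, t))" for i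
          by (simp add: merge_in \<beta>_def)
        have Pt: "P \<in> t"
          by (rule mcs_deriv[OF t(1)]) (auto intro!: derivable.Taut simp: P_def taut_def taut_negs wf_negs)
        have "outc s ?\<sigma> = du (?\<sigma> j)"
        proof (rule outc_win)
          show "j \<in> Ag" by (rule j)
          show "\<forall>i\<in>Ag. i \<noteq> j \<longrightarrow> dk (?\<sigma> i) < dk (?\<sigma> j)"
          proof (intro ballI impI)
            fix i assume i: "i \<in> Ag" "i \<noteq> j"
            show "dk (?\<sigma> i) < dk (?\<sigma> j)"
            proof (cases "i \<in> C")
              case True
              have "dk (\<alpha> i) \<le> (\<Sum>i\<in>C. dk (\<alpha> i))" using finC True by (intro member_le_sum) auto
              then show ?thesis using True sC sO[OF j] by (simp add: K_def)
            next
              case False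
              then show ?thesis using sO[OF i(1) False] sO[OF j] i by (simp add: K_def)
            qed
          qed
          show "mcs (du (?\<sigma> j))" using sO[OF j] t by simp
          show "Gam s \<union> Eff s ?pr Ag \<subseteq> du (?\<sigma> j)"
          proof -
            have "Eff s ?pr Ag \<subseteq> t"
            proof
              fix p assume "p \<in> Eff s ?pr Ag"
              then obtain i where i: "i \<in> Ag" "p = ?pr i" "Box {j'\<in>Ag. ?pr j' = ?pr i} (?pr i) \<in> s"
                unfolding Eff_def by blast
              show "p \<in> t"
              proof (cases "i \<in> C")
                case True
                have pri: "?pr i = ?pa i" using sC[OF True] by simp
                have "{j'\<in>Ag. ?pr j' = ?pr i} = {j'\<in>C. ?pa j' = ?pa i}"
                proof (intro set_eqI iffI)
                  fix x assume x: "x \<in> {j'\<in>Ag. ?pr j' = ?pr i}"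
                  show "x \<in> {j'\<in>C. ?pa j' = ?pa i}"
                  proof (cases "x \<in> C")
                    case True then show ?thesis using x sC pri by auto
                  next
                    case False
                    then have "?pr x = P" using sO[of x] x by (auto split: if_splits)
                    then have "P = ?pa i" using x pri by simp
                    then show ?thesis using m True P_def by auto
                  qed
                next
                  fix x assume "x \<in> {j'\<in>C. ?pa j' = ?pa i}"
                  then show "x \<in> {j'\<in>Ag. ?pr j' = ?pr i}" using sC pri C by auto
                qed
                then have "?pa i \<in> Eff s ?pa C" using i True pri unfolding Eff_def by auto
                then show ?thesis using t(2) i(2) pri by auto
              next
                case False
                then have "?pr i = P" using sO[OF i(1)] by (auto split: if_splits)
                then show ?thesis using Pt i(2) by simp
              qed
            qed
            then show ?thesis using t(2) sO[OF j] by auto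
          qed
        qed
        then have o: "outc s ?\<sigma> = t" using sO[OF j] by simp
        have "\<phi> \<in> t" using all \<beta> IH o by metis
        moreover have "Neg \<phi> \<in> t" using t by auto
        ultimately show False using mcs_neg[OF t(1) w] by blast
      qed
    qed
  qed
qed

lemma model: "is_model Ag X D {M. mcs M} Sg outc vl"
proof -
  obtain M0 where "mcs M0" using lindenbaum[OF cons_empty] by auto
  then show ?thesis unfolding is_model_def
    using outc_mcs vl_prop by (auto simp: Sg_def)
qed

end

theorem mainTheorem9:
  fixes Ag :: "'a set" and X :: "'x set" and D :: "'x \<Rightarrow> 'v set"
    and \<phi> :: "('a, 'x, 'v) fm"
  assumes "signature Ag X D"
    and "wf Ag X D \<phi>"
    and "\<forall>(S :: ('a, 'x, 'v) fm set set) (Sig :: 'a \<Rightarrow> ('a, 'x, 'v) fm set set) out val.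
           is_model Ag X D S Sig out val \<longrightarrow> (\<forall>s\<in>S. sat Ag Sig out val s \<phi>)"
  shows "derivable Ag X D \<phi>"
proof (rule ccontr)
  assume nd: "\<not> derivable Ag X D \<phi>"
  interpret vcl Ag X D by unfold_locales (rule assms(1))
  have "cons {Neg \<phi>}"
    unfolding cons_def
  proof (intro allI impI notI)
    fix L assume L: "set L \<subseteq> {Neg \<phi>}" and d: "derivable Ag X D (Neg (conjs L))"
    have "derivable Ag X D \<phi>"
    proof (rule derive_prop[of "[Neg (conjs L)]"])
      show "\<forall>p\<in>set [Neg (conjs L)]. derivable Ag X D p" using d by simp
      show "wf Ag X D \<phi>" by (rule assms(2))
      show "\<forall>V. (\<forall>p\<in>set [Neg (conjs L)]. peval V p) \<longrightarrow> peval V \<phi>" using L by auto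
    qed
    then show False using nd by simp
  qed
  then obtain M where M: "mcs M" "Neg \<phi> \<in> M" using lindenbaum[of "{Neg \<phi>}"] assms(2) by auto
  have "sat Ag Sg outc vl M \<phi>" using assms(3) model M by blast
  then have "\<phi> \<in> M" using truth[OF assms(2) M(1)] by simp
  then show False using M mcs_neg[OF M(1) assms(2)] by blast
qed

end
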